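(* Let $a=1$, $b=-1$. For all $(J,E)\in D_1$ one has $\frac{\partial T}{\partial E}(J,E)>0$ and $\frac{\partial T}{\partial J}(J,E)<0$.
   Context: With $a=1$, $b=-1$, let $V_J(r)=\frac{J^2}{2r^2}+\frac{r^2}{2}-\frac{r^4}{4}$. For $0<J<\sqrt{4/27}$ write $J=q(1-q^2)=Q(1-Q^2)$ with $0<q<1/\sqrt3<Q<1$, and set $E_-(J)=\frac14(1-Q^2)(3Q^2+1)$, $E_+(J)=\frac14(1-q^2)(3q^2+1)$. Let $D_1=\{(J,E):0<J<\sqrt{4/27},\ E_-(J)<E<E_+(J)\}$. For $(J,E)\in D_1$, let $r_1<r_2<r_3$ be the positive roots of $E-V_J(r)$ and define $T(J,E)=2\int_{r_1}^{r_2}\frac{dr}{\sqrt{2(E-V_J(r))}}$ (the period of the modulus of the solution of $u_{xx}+u-|u|^2u=0$ with $\operatorname{Im}(u\bar u_x)=J$ and $\frac12|u_x|^2+\frac12|u|^2-\frac14|u|^4=E$). *)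

theory Defs
  imports "HOL-Analysis.Analysis"
begin

text \<open>Effective potential with a = 1, b = -1.\<close>
definition VJ :: "real \<Rightarrow> real \<Rightarrow> real" where
  "VJ J r = J\<^sup>2 / (2 * r\<^sup>2) + r\<^sup>2 / 2 - r ^ 4 / 4"

definition small_q :: "real \<Rightarrow> real" where
  "small_q J = (THE q. 0 < q \<and> q < 1 / sqrt 3 \<and> q * (1 - q\<^sup>2) = J)"

definition big_Q :: "real \<Rightarrow> real" where
  "big_Q J = (THE Q. 1 / sqrt 3 < Q \<and> Q < 1 \<and> Q * (1 - Q\<^sup>2) = J)"

definition E_minus :: "real \<Rightarrow> real" where
  "E_minus J = (1 - (big_Q J)\<^sup>2) * (3 * (big_Q J)\<^sup>2 + 1) / 4"

definition E_plus :: "real \<Rightarrow> real" where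
  "E_plus J = (1 - (small_q J)\<^sup>2) * (3 * (small_q J)\<^sup>2 + 1) / 4"

definition D1 :: "(real \<times> real) set" where
  "D1 = {(J, E). 0 < J \<and> J < sqrt (4 / 27) \<and> E_minus J < E \<and> E < E_plus J}"

text \<open>Positive roots of E - V_J; on D1 there are exactly three, r1 < r2 < r3.\<close>
definition pos_roots :: "real \<Rightarrow> real \<Rightarrow> real set" where
  "pos_roots J E = {r. 0 < r \<and> E - VJ J r = 0}"

definition root1 :: "real \<Rightarrow> real \<Rightarrow> real" where
  "root1 J E = Min (pos_roots J E)"

definition root2 :: "real \<Rightarrow> real \<Rightarrow> real" where
  "root2 J E = Min (pos_roots J E - {root1 J E})"

text \<open>Period of the modulus (improper integral, as a Henstock-Kurzweil integral).\<close>
definition period :: "real \<Rightarrow> real \<Rightarrow> real" where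
  "period J E = 2 * integral {root1 J E .. root2 J E} (\<lambda>r. 1 / sqrt (2 * (E - VJ J r)))"

end

theory Submission
  imports Defs
begin


definition pc :: "real \<Rightarrow> real \<Rightarrow> real \<Rightarrow> real" where
  "pc j e s = s ^ 3 - 2 * s ^ 2 + 4 * e * s - 2 * j ^ 2"

lemma cubic_fact:
  assumes "x1 < x2" "x2 < x3" "pc j e x1 = 0" "pc j e x2 = 0" "pc j e x3 = 0"
  shows "x3 = 2 - x1 - x2" "\<And>s. pc j e s = (s-x1)*(s-x2)*(s-x3)"
proof -
  have a: "x1^2 + x1*x2 + x2^2 - 2*(x1+x2) + 4*e = 0"
  proof -
    have "(x1-x2)*(x1^2 + x1*x2 + x2^2 - 2*(x1+x2) + 4*e) = pc j e x1 - pc j e x2"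
      by (simp add: pc_def algebra_simps power2_eq_square power3_eq_cube)
    then show ?thesis using assms by simp
  qed
  have b: "x1^2 + x1*x3 + x3^2 - 2*(x1+x3) + 4*e = 0"
  proof -
    have "(x1-x3)*(x1^2 + x1*x3 + x3^2 - 2*(x1+x3) + 4*e) = pc j e x1 - pc j e x3"
      by (simp add: pc_def algebra_simps power2_eq_square power3_eq_cube)
    then show ?thesis using assms by simp
  qed
  have "(x2 - x3) * (x1 + x2 + x3 - 2) = 0"
    using a b by (simp add: algebra_simps power2_eq_square) 
  then show s: "x3 = 2 - x1 - x2" using assms by simp
  fix s
  show "pc j e s = (s-x1)*(s-x2)*(s-x3)"
  proof -
    have e: "4*e = -(x1^2 + x1*x2 + x2^2 - 2*(x1+x2))" using a by simp
    have j: "2*j^2 = x1^3 - 2*x1^2 + 4*e*x1" using assms(3) by (simp add: pc_def)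
    show ?thesis unfolding pc_def s using e j
      by algebra
  qed
qed

definition three :: "real \<Rightarrow> real \<Rightarrow> real \<Rightarrow> real \<Rightarrow> bool" where
  "three j e s1 s2 \<longleftrightarrow> 0 < s1 \<and> s1 < s2 \<and> s2 < 2 - s1 - s2 \<and>
     (\<forall>s. pc j e s = (s-s1)*(s-s2)*(s-(2-s1-s2)))"

lemma VJ_pc: "r > 0 \<Longrightarrow> 4*r^2*(e - VJ j r) = pc j e (r^2)"
  unfolding VJ_def pc_def by (simp add: field_simps power2_eq_square power3_eq_cube)
    (simp add: algebra_simps power4_eq_xxxx)

lemma pos_roots_three:
  assumes "three j e s1 s2"
  shows "pos_roots j e = {sqrt s1, sqrt s2, sqrt (2-s1-s2)}"
proof -
  from assms have p: "0 < s1" "s1 < s2" "s2 < 2 - s1 - s2"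
    and f: "\<And>s. pc j e s = (s-s1)*(s-s2)*(s-(2-s1-s2))" by (auto simp: three_def)
  have "r \<in> pos_roots j e \<longleftrightarrow> r \<in> {sqrt s1, sqrt s2, sqrt (2-s1-s2)}" for r
  proof
    assume r: "r \<in> pos_roots j e"
    then have r0: "r > 0" and "e - VJ j r = 0" by (auto simp: pos_roots_def)
    then have "pc j e (r^2) = 0" using VJ_pc[OF r0, of e j] by simp
    then have "r^2 = s1 \<or> r^2 = s2 \<or> r^2 = 2-s1-s2" by (simp add: f)
    moreover have "r = sqrt (r^2)" using r0 by simp
    ultimately show "r \<in> {sqrt s1, sqrt s2, sqrt (2-s1-s2)}" by (metis insertCI)
  next
    assume "r \<in> {sqrt s1, sqrt s2, sqrt (2-s1-s2)}"
    then have r0: "r > 0" and "pc j e (r^2) = 0" using p by (auto simp: f)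
    then show "r \<in> pos_roots j e" using VJ_pc[OF r0, of e j] by (auto simp: pos_roots_def)
  qed
  then show ?thesis by blast
qed

lemma roots_three:
  assumes "three j e s1 s2"
  shows "root1 j e = sqrt s1" "root2 j e = sqrt s2"
proof -
  from assms have p: "0 < s1" "s1 < s2" "s2 < 2 - s1 - s2" by (auto simp: three_def)
  then have o: "sqrt s1 < sqrt s2" "sqrt s2 < sqrt (2-s1-s2)" by auto
  show r1: "root1 j e = sqrt s1" unfolding root1_def pos_roots_three[OF assms]
    using o by (auto simp: Min_insert)
  show "root2 j e = sqrt s2" unfolding root2_def r1 pos_roots_three[OF assms]
    using o by (auto simp: insert_Diff_if Min_insert)
qed

lemma three_from_signs:
  assumes "0 \<le> a0" "a0 < a1" "a1 \<le> a2" "a2 < a3" "a3 \<le> a4" "a4 < a5"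
    "pc j e a0 < 0" "pc j e a1 > 0" "pc j e a2 > 0" "pc j e a3 < 0" "pc j e a4 < 0" "pc j e a5 > 0"
  shows "\<exists>t1 t2. three j e t1 t2 \<and> a0 < t1 \<and> t1 < a1 \<and> a2 < t2 \<and> t2 < a3
           \<and> a4 < 2-t1-t2 \<and> 2-t1-t2 < a5"
proof -
  have c: "continuous_on A (pc j e)" for A unfolding pc_def by (intro continuous_intros)
  obtain t1 where t1: "a0 \<le> t1" "t1 \<le> a1" "pc j e t1 = 0"
    using IVT'[of "pc j e" a0 0 a1] assms c by force
  obtain t2 where t2: "a2 \<le> t2" "t2 \<le> a3" "pc j e t2 = 0"
    using IVT2'[of "pc j e" a3 0 a2] assms c by force
  obtain t3 where t3: "a4 \<le> t3" "t3 \<le> a5" "pc j e t3 = 0"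
    using IVT'[of "pc j e" a4 0 a5] assms c by force
  have ne: "t1 \<noteq> a0" "t1 \<noteq> a1" "t2 \<noteq> a2" "t2 \<noteq> a3" "t3 \<noteq> a4" "t3 \<noteq> a5"
    using assms t1 t2 t3 by auto
  have o: "t1 < t2" "t2 < t3" using t1 t2 t3 ne assms by auto
  note cf = cubic_fact[OF o t1(3) t2(3) t3(3)]
  have "three j e t1 t2" unfolding three_def using cf o t1 ne assms by auto
  then show ?thesis using cf t1 t2 t3 ne by (intro exI[of _ t1] exI[of _ t2]) auto
qed




lemma sgn3: 
  "a < 0 \<Longrightarrow> b < 0 \<Longrightarrow> c < 0 \<Longrightarrow> a*b*c < (0::real)"
  "a > 0 \<Longrightarrow> b < 0 \<Longrightarrow> c < 0 \<Longrightarrow> a*b*c > (0::real)"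
  "a > 0 \<Longrightarrow> b > 0 \<Longrightarrow> c < 0 \<Longrightarrow> a*b*c < (0::real)"
  "a > 0 \<Longrightarrow> b > 0 \<Longrightarrow> c > 0 \<Longrightarrow> a*b*c > (0::real)"
  by (auto intro: mult_pos_neg mult_neg_neg mult_pos_pos mult_neg_pos)

lemma pc_tendsto: "(jf \<longlongrightarrow> j0) F \<Longrightarrow> (ef \<longlongrightarrow> e0) F \<Longrightarrow>
   ((\<lambda>x. pc (jf x) (ef x) a) \<longlongrightarrow> pc j0 e0 a) F"
  unfolding pc_def by (intro tendsto_intros)

lemma three_near:
  assumes th: "three j0 e0 s1 s2" and ep: "\<epsilon> > 0" and jf: "(jf \<longlongrightarrow> j0) F" and ef: "(ef \<longlongrightarrow> e0) F"
  shows "\<forall>\<^sub>F x in F. \<exists>t1 t2. three (jf x) (ef x) t1 t2 \<and> \<bar>t1 - s1\<bar> < \<epsilon> \<and> \<bar>t2 - s2\<bar> < \<epsilon>"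
proof -
  define s3 where "s3 = 2 - s1 - s2"
  from th have p: "0 < s1" "s1 < s2" "s2 < s3"
    and f: "\<And>s. pc j0 e0 s = (s-s1)*(s-s2)*(s-s3)" by (auto simp: three_def s3_def)
  define d where "d = min \<epsilon> (min (s1/2) (min ((s2-s1)/3) ((s3-s2)/3)))"
  have d: "d > 0" "d \<le> \<epsilon>" "d \<le> s1/2" "d \<le> (s2-s1)/3" "d \<le> (s3-s2)/3"
    using p ep unfolding d_def by (simp_all add: min_def)
  have g0: "pc j0 e0 (s1-d) < 0" unfolding f using d p by (intro sgn3) auto
  have g1: "pc j0 e0 (s1+d) > 0" unfolding f using d p by (intro sgn3) auto
  have g2: "pc j0 e0 (s2-d) > 0" unfolding f using d p by (intro sgn3) auto
  have g3: "pc j0 e0 (s2+d) < 0" unfolding f using d p by (intro sgn3) auto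
  have g4: "pc j0 e0 (s3-d) < 0" unfolding f using d p by (intro sgn3) auto
  have g5: "pc j0 e0 (s3+d) > 0" unfolding f using d p by (intro sgn3) auto
  have ev: "\<forall>\<^sub>F x in F. pc (jf x) (ef x) (s1-d) < 0 \<and> pc (jf x) (ef x) (s1+d) > 0
     \<and> pc (jf x) (ef x) (s2-d) > 0 \<and> pc (jf x) (ef x) (s2+d) < 0
     \<and> pc (jf x) (ef x) (s3-d) < 0 \<and> pc (jf x) (ef x) (s3+d) > 0"
    using order_tendstoD(2)[OF pc_tendsto[OF jf ef] g0] order_tendstoD(1)[OF pc_tendsto[OF jf ef] g1]
      order_tendstoD(1)[OF pc_tendsto[OF jf ef] g2] order_tendstoD(2)[OF pc_tendsto[OF jf ef] g3]
      order_tendstoD(2)[OF pc_tendsto[OF jf ef] g4] order_tendstoD(1)[OF pc_tendsto[OF jf ef] g5]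
    by (simp add: eventually_conj_iff)
  show ?thesis
  proof (rule eventually_mono[OF ev], goal_cases)
    case (1 x)
    have "\<exists>t1 t2. three (jf x) (ef x) t1 t2 \<and> s1-d < t1 \<and> t1 < s1+d \<and> s2-d < t2 \<and> t2 < s2+d
           \<and> s3-d < 2-t1-t2 \<and> 2-t1-t2 < s3+d"
      using d p 1 by (intro three_from_signs) auto
    then show ?case using d by (metis abs_diff_less_iff order_less_le_trans)
  qed
qed




lemma cfacts: "0 < 1/sqrt 3" "(1/sqrt 3)^2 = 1/3" "1/sqrt 3 < 1"
  "sqrt (4/27) = 2/3 * (1/sqrt 3)"
proof -
  show "0 < 1/sqrt 3" by simp
  show c2: "(1/sqrt 3)^2 = 1/3" by (simp add: power_divide)
  show "1/sqrt 3 < 1" by simp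
  show "sqrt (4/27) = 2/3 * (1/sqrt 3)"
    by (rule real_sqrt_unique) (simp_all add: power_mult_distrib power_divide)
qed

lemma f_mono_small:
  assumes "0 < a" "a < b" "b < 1/sqrt 3"
  shows "a*(1-a^2) < b*(1-b^2)"
proof -
  have "b^2 < (1/sqrt 3)^2" using assms by (intro power_strict_mono) auto
  then have b2: "b^2 < 1/3" using cfacts by simp
  have "a^2 < b^2" using assms by (intro power_strict_mono) auto
  moreover have "a*b < b^2" using assms by (simp add: power2_eq_square)
  ultimately have "0 < 1 - (a^2 + a*b + b^2)" using b2 by linarith
  then have "0 < (b-a)*(1 - (a^2 + a*b + b^2))" using assms by simp
  then show ?thesis by (simp add: algebra_simps power2_eq_square)
qed

lemma f_mono_big:
  assumes "1/sqrt 3 < a" "a < b"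
  shows "b*(1-b^2) < a*(1-a^2)"
proof -
  have "(1/sqrt 3)^2 < a^2" using assms cfacts by (intro power_strict_mono) auto
  then have a2: "1/3 < a^2" using cfacts by simp
  have a0: "0 < a" using assms cfacts(1) by linarith
  have "a^2 < b^2" using assms a0 by (intro power_strict_mono) auto
  moreover have "a^2 < a*b" using assms a0 by (simp add: power2_eq_square)
  ultimately
  have "1 - (a^2 + a*b + b^2) < 0" using a2 by linarith
  then have "(b-a)*(1 - (a^2 + a*b + b^2)) < 0" using assms by (simp add: mult_pos_neg)
  then show ?thesis by (simp add: algebra_simps power2_eq_square)
qed

lemma small_q:
  assumes "0 < J" "J < sqrt (4/27)"
  shows "0 < small_q J \<and> small_q J < 1/sqrt 3 \<and> small_q J * (1 - (small_q J)^2) = J"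
proof -
  let ?c = "1/sqrt 3 :: real"
  let ?P = "\<lambda>q. 0 < q \<and> q < ?c \<and> q * (1 - q^2) = J"
  have c: "continuous_on {0..?c} (\<lambda>q::real. q * (1 - q^2))" by (intro continuous_intros)
  have fc: "?c * (1 - ?c^2) = sqrt (4/27)" unfolding cfacts(2) cfacts(4) by simp
  obtain q where q: "0 \<le> q" "q \<le> ?c" "q * (1 - q^2) = J"
    using IVT'[of "\<lambda>q. q * (1 - q^2)" 0 J ?c] c assms fc cfacts by auto
  have "q \<noteq> 0" "q \<noteq> ?c" using q assms fc by auto
  then have Pq: "?P q" using q by auto
  have "\<exists>!q. ?P q"
  proof (rule ex1I[of _ q])
    show "?P q" by (rule Pq)
    fix r assume r: "?P r"
    show "r = q"
    proof (rule ccontr)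
      assume "r \<noteq> q"
      then have "r < q \<or> q < r" by auto
      then show False using f_mono_small[of r q] f_mono_small[of q r] r Pq by auto
    qed
  qed
  then have "?P (THE q. ?P q)" by (rule theI')
  then show ?thesis unfolding small_q_def .
qed

lemma big_Q:
  assumes "0 < J" "J < sqrt (4/27)"
  shows "1/sqrt 3 < big_Q J \<and> big_Q J < 1 \<and> big_Q J * (1 - (big_Q J)^2) = J"
proof -
  let ?c = "1/sqrt 3 :: real"
  let ?P = "\<lambda>q. ?c < q \<and> q < 1 \<and> q * (1 - q^2) = J"
  have c: "continuous_on {?c..1} (\<lambda>q::real. q * (1 - q^2))" by (intro continuous_intros)
  have fc: "?c * (1 - ?c^2) = sqrt (4/27)" unfolding cfacts(2) cfacts(4) by simp
  obtain q where q: "?c \<le> q" "q \<le> 1" "q * (1 - q^2) = J"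
    using IVT2'[of "\<lambda>q. q * (1 - q^2)" 1 J ?c] c assms fc cfacts by auto
  have "q \<noteq> 1" "q \<noteq> ?c" using q assms fc by auto
  then have Pq: "?P q" using q by auto
  have "\<exists>!q. ?P q"
  proof (rule ex1I[of _ q])
    show "?P q" by (rule Pq)
    fix r assume r: "?P r"
    show "r = q"
    proof (rule ccontr)
      assume "r \<noteq> q"
      then have "r < q \<or> q < r" by auto
      then show False using f_mono_big[of r q] f_mono_big[of q r] r Pq by auto
    qed
  qed
  then have "?P (THE q. ?P q)" by (rule theI')
  then show ?thesis unfolding big_Q_def .
qed

lemma pc_special: "J = q*(1-q^2) \<Longrightarrow> pc J E (1-q^2) = (1-q^2)*(4*E - (1-q^2)*(3*q^2+1))"
  unfolding pc_def by algebra

lemma D1_three: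
  assumes "(J, E) \<in> D1"
  shows "\<exists>s1 s2. three J E s1 s2"
proof -
  from assms have J: "0 < J" "J < sqrt (4/27)" and E: "E_minus J < E" "E < E_plus J"
    by (auto simp: D1_def)
  define q where "q = small_q J"
  define Q where "Q = big_Q J"
  have q: "0 < q" "q < 1/sqrt 3" "J = q*(1-q^2)" using small_q[OF J] by (auto simp: q_def)
  have Q: "1/sqrt 3 < Q" "Q < 1" "J = Q*(1-Q^2)" using big_Q[OF J] by (auto simp: Q_def)
  have Eq: "E < (1-q^2)*(3*q^2+1)/4" using E by (simp add: E_plus_def q_def)
  have EQ: "(1-Q^2)*(3*Q^2+1)/4 < E" using E by (simp add: E_minus_def Q_def)
  have Q0: "0 < Q" using Q(1) cfacts(1) by linarith
  have "Q^2 < 1^2" using Q Q0 by (intro power_strict_mono) auto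
  then have Q2: "Q^2 < 1" by simp
  have qQ: "q^2 < Q^2" using q Q by (intro power_strict_mono) auto
  have "0 < 3*Q^2+1" by (simp add: add_nonneg_pos)
  then have "0 < (1-Q^2)*(3*Q^2+1)/4" using Q2 by simp
  then have E0: "E > 0" using EQ by linarith
  have s1: "sqrt (4/27::real) < 1" using real_sqrt_less_mono[of "4/27" 1] by simp
  have J1: "J < 1" using J s1 by linarith
  then have "J^2 < 1" using J by (simp add: abs_square_less_1)
  have "\<exists>t1 t2. three J E t1 t2 \<and> 0 < t1 \<and> t1 < 1-Q^2 \<and> 1-Q^2 < t2 \<and> t2 < 1-q^2
           \<and> 1-q^2 < 2-t1-t2 \<and> 2-t1-t2 < 3"
  proof (rule three_from_signs)
    show "pc J E 0 < 0" using J by (simp add: pc_def)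
    show "pc J E (1-Q^2) > 0" "pc J E (1-Q^2) > 0" using pc_special[OF Q(3), of E] Q2 EQ by simp_all
    show "pc J E (1-q^2) < 0" "pc J E (1-q^2) < 0" using pc_special[OF q(3), of E] qQ Q2 Eq
      by (simp_all add: mult_pos_neg)
    show "pc J E 3 > 0" using E0 \<open>J^2 < 1\<close> by (simp add: pc_def)
    show "0 \<le> (0::real)" "(0::real) < 1-Q^2" "1-Q^2 \<le> 1-Q^2" "1-Q^2 < 1-q^2" "1-q^2 \<le> 1-q^2"
      "1-q^2 < (3::real)" using Q2 qQ zero_le_power2[of q] by linarith+
  qed
  then show ?thesis by blast
qed




definition hh :: "real \<Rightarrow> real \<Rightarrow> real \<Rightarrow> real" where
  "hh x y t = 1 / sqrt (2 - x*(1+(cos t)^2) - y*(1+(sin t)^2))"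

lemma three_D:
  assumes "three j e s1 s2"
  shows "2 - s1*(1+(cos t)^2) - s2*(1+(sin t)^2) > 0"
proof -
  from assms have p: "0 < s1" "s1 < s2" "s2 < 2 - s1 - s2" by (auto simp: three_def)
  have "s2*(sin t)^2 + s1*(cos t)^2 \<le> s2*(sin t)^2 + s2*(cos t)^2"
    using p by (intro add_left_mono mult_right_mono) auto
  also have "\<dots> = s2" by (simp add: algebra_simps flip: distrib_left)
  finally show ?thesis using p by (simp add: algebra_simps)
qed

lemma hh_cont: assumes "three j e s1 s2" shows "continuous_on A (hh s1 s2)"
proof -
  have D: "2 - s1*(1+(cos t)^2) \<noteq> s2*(1+(sin t)^2)" for t
    using three_D[OF assms, of t] by linarith
  show ?thesis unfolding hh_def by (intro continuous_intros) (auto simp: D)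
qed

lemma sin2_le1: "(sin (t::real))^2 \<le> 1" using sin_cos_squared_add[of t] zero_le_power2[of "cos t"] by linarith

lemma period_formula:
  assumes th: "three j e s1 s2"
  shows "period j e = 2 * sqrt 2 * integral {0..pi/2} (hh s1 s2)"
proof -
  define s3 where "s3 = 2 - s1 - s2"
  from th have p: "0 < s1" "s1 < s2" "s2 < s3"
    and fc: "\<And>s. pc j e s = (s-s1)*(s-s2)*(s-s3)" by (auto simp: three_def s3_def)
  define b where "b = s2 - s1"
  have b: "b > 0" using p by (simp add: b_def)
  define S where "S t = s1 + b * (sin t)^2" for t
  have S: "S t \<ge> s1" "S t \<le> s2" for t
  proof -
    have "b*(sin t)^2 \<le> b" "0 \<le> b*(sin t)^2" using b sin2_le1[of t] by (simp_all add: mult_left_le)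
    then show "S t \<ge> s1" "S t \<le> s2" by (auto simp: S_def b_def)
  qed
  define g where "g t = sqrt (S t)" for t
  define g' where "g' t = b * sin t * cos t / g t" for t
  define f where "f r = 1 / sqrt (2 * (e - VJ j r))" for r
  define k where "k t = f (g t) * g' t" for t
  have gpos: "g t > 0" for t using S[of t] p by (simp add: g_def)
  have deriv: "(g has_real_derivative g' t) (at t)" for t
  proof -
    have "((\<lambda>t. sqrt (s1 + b * (sin t)^2)) has_real_derivative
          inverse (sqrt (S t)) * (cos t * (sin t * b))) (at t)"
      using S[of t] p by (auto intro!: derivative_eq_intros simp: S_def)
    moreover have "inverse (sqrt (S t)) * (cos t * (sin t * b)) = g' t"
      by (simp add: g'_def g_def divide_inverse)
    moreover have gfun: "g = (\<lambda>t. sqrt (s1 + b * (sin t)^2))" by (simp add: fun_eq_iff g_def S_def)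
    ultimately show ?thesis unfolding gfun by simp
  qed
  have contg': "continuous_on {0..pi/2} g'"
  proof -
    have "s1 + b*(sin t)^2 \<noteq> 0" for t using gpos[of t] by (auto simp: g_def S_def)
    then show ?thesis unfolding g'_def g_def S_def by (intro continuous_intros) auto
  qed
  have g'nn: "g' t \<ge> 0" if "t \<in> {0..pi/2}" for t
  proof -
    have "sin t \<ge> 0" "cos t \<ge> 0" using that by (auto intro!: sin_ge_zero cos_ge_zero)
    then show ?thesis using b gpos[of t] by (simp add: g'_def)
  qed
  have g0: "g 0 = sqrt s1" and g1: "g (pi/2) = sqrt s2"
    by (simp_all add: g_def S_def b_def)
  have key: "2 * (e - VJ j (g t)) = (b * (sin t * cos t))^2 * (s3 - S t) / (2 * S t)" for t
  proof -
    have S0: "S t > 0" using S[of t] p by simp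
    have "4 * (g t)^2 * (e - VJ j (g t)) = pc j e ((g t)^2)" by (rule VJ_pc[OF gpos])
    also have "(g t)^2 = S t" using S0 by (simp add: g_def)
    also have "pc j e (S t) = (b * (sin t)^2) * (- b * (cos t)^2) * (S t - s3)"
      unfolding fc by (simp add: S_def b_def cos_squared_eq algebra_simps)
    finally have "4 * S t * (e - VJ j (g t)) = (b * (sin t * cos t))^2 * (s3 - S t)"
      by (simp add: algebra_simps power2_eq_square)
    then have "e - VJ j (g t) = (b*(sin t*cos t))^2*(s3 - S t)/(4*S t)"
      using S0 by (simp add: eq_divide_eq mult.commute mult.left_commute)
    then show ?thesis by simp
  qed
  have Dpos: "s3 - S t > 0" for t using S[of t] p by simp
  have hh_eq: "hh s1 s2 t = 1 / sqrt (s3 - S t)" for t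
    unfolding hh_def S_def s3_def b_def by (simp add: cos_squared_eq algebra_simps)
  have knn: "k t \<ge> 0" if "t \<in> {0..pi/2}" for t
  proof -
    have "e - VJ j (g t) \<ge> 0"
    proof -
      have "S t > 0" using S[of t] p by simp
      then have "(b * (sin t * cos t))^2 * (s3 - S t) / (2 * S t) \<ge> 0" using Dpos[of t] by simp
      then have "0 \<le> 2 * (e - VJ j (g t))" unfolding key[of t] .
      then show ?thesis by simp
    qed
    then have "f (g t) \<ge> 0" by (simp add: f_def)
    then show ?thesis using g'nn[OF that] by (simp add: k_def)
  qed
  have keq: "k t = sqrt 2 * hh s1 s2 t" if "t \<in> {0<..<pi/2}" for t
  proof -
    have sc: "sin t > 0" "cos t > 0" using that by (auto intro!: sin_gt_zero cos_gt_zero)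
    have S0: "S t > 0" using S[of t] p by simp
    have X: "sqrt (2 * (e - VJ j (g t))) = (b * (sin t * cos t)) * sqrt (s3 - S t) / sqrt (2 * S t)"
    proof -
      have "sqrt ((b*(sin t*cos t))^2 * (s3-S t)/(2*S t)) = sqrt ((b*(sin t*cos t))^2) * sqrt (s3 - S t) / sqrt (2*S t)"
        by (simp add: real_sqrt_mult real_sqrt_divide)
      also have "sqrt ((b*(sin t*cos t))^2) = b*(sin t*cos t)" using b sc by simp
      finally show ?thesis unfolding key .
    qed
    have s2S: "sqrt (2*S t) = sqrt 2 * sqrt (S t)" by (simp add: real_sqrt_mult)
    have pos: "sqrt (s3 - S t) > 0" "sqrt (S t) > 0" "b*(sin t*cos t) > 0" using Dpos[of t] S0 b sc by auto
    have "k t = (1 / ((b*(sin t*cos t)) * sqrt (s3 - S t) / (sqrt 2 * sqrt (S t)))) * (b*(sin t*cos t) / sqrt (S t))"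
      unfolding k_def f_def g'_def X s2S by (simp add: g_def mult.assoc)
    also have "\<dots> = sqrt 2 / sqrt (s3 - S t)" using pos b sc by (simp add: field_simps)
    finally show ?thesis unfolding hh_eq by simp
  qed
  define I where "I = integral {0..pi/2} (hh s1 s2)"
  have hI: "(hh s1 s2 has_integral I) {0..pi/2}"
    unfolding I_def using hh_cont[OF th] by (intro integrable_integral integrable_continuous_interval)
  have kI: "(k has_integral sqrt 2 * I) {0..pi/2}"
  proof (rule has_integral_spike_finite[of "{0, pi/2}"])
    show "((\<lambda>t. sqrt 2 * hh s1 s2 t) has_integral sqrt 2 * I) {0..pi/2}"
      using has_integral_mult_right[OF hI] by simp
  qed (use keq in auto)
  have N1: "(\<integral>\<^sup>+t. ennreal (k t) * indicator {0..pi/2} t \<partial>lborel) = ennreal (sqrt 2 * I)"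
    by (rule nn_integral_has_integral_lebesgue'[OF knn kI])
  have meas: "f \<in> borel_measurable borel" unfolding f_def VJ_def by measurable
  have N2: "(\<integral>\<^sup>+x. ennreal (f x * indicator {g 0..g (pi/2)} x) \<partial>lborel) =
        (\<integral>\<^sup>+x. ennreal (f (g x) * g' x * indicator {0..pi/2} x) \<partial>lborel)"
    using meas deriv contg' g'nn
    by (intro nn_integral_substitution) (auto simp: set_borel_measurable_def)
  also have "\<dots> = (\<integral>\<^sup>+t. ennreal (k t) * indicator {0..pi/2} t \<partial>lborel)"
    by (intro nn_integral_cong) (auto simp: k_def indicator_def)
  finally have N: "(\<integral>\<^sup>+x. ennreal (f x * indicator {sqrt s1..sqrt s2} x) \<partial>lborel) = ennreal (sqrt 2 * I)"
    using N1 g0 g1 by simp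
  have Inn: "I \<ge> 0"
  proof -
    have "hh s1 s2 t \<ge> 0" for t using Dpos[of t] by (simp add: hh_eq)
    then show ?thesis using has_integral_nonneg[OF hI] by auto
  qed
  have fnn: "f x * indicator {sqrt s1..sqrt s2} x \<ge> 0" for x
  proof (cases "x \<in> {sqrt s1..sqrt s2}")
    case True
    then have x0: "x > 0" using p by (auto intro: less_le_trans[of 0 "sqrt s1"])
    have "x^2 \<ge> s1" "x^2 \<le> s2" using True p real_sqrt_le_iff[of s1 "x^2"] real_sqrt_le_iff[of "x^2" s2] x0
      by auto
    then have "(x^2-s1)*(x^2-s2) \<le> 0" by (intro mult_nonneg_nonpos) auto
    then have "pc j e (x^2) \<ge> 0" unfolding fc using p \<open>x^2 \<le> s2\<close>
      by (intro mult_nonpos_nonpos) auto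
    then have "0 \<le> (4 * x^2) * (e - VJ j x)" using VJ_pc[OF x0, of e j] by simp
    then have "e - VJ j x \<ge> 0" using x0 by (simp add: zero_le_mult_iff)
    then show ?thesis using True by (simp add: f_def)
  qed (simp)
  have "((\<lambda>x. f x * indicator {sqrt s1..sqrt s2} x) has_integral sqrt 2 * I) UNIV"
    using N fnn Inn meas by (intro nn_integral_has_integral) auto
  then have "(f has_integral sqrt 2 * I) {sqrt s1..sqrt s2}"
  proof -
    have "(\<lambda>x. f x * indicator {sqrt s1..sqrt s2} x) = (\<lambda>x. if x \<in> {sqrt s1..sqrt s2} then f x else 0)"
      by (auto simp: indicator_def fun_eq_iff)
    with \<open>((\<lambda>x. f x * indicator {sqrt s1..sqrt s2} x) has_integral sqrt 2 * I) UNIV\<close>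
    show ?thesis by (metis has_integral_restrict_UNIV)
  qed
  then have "integral {root1 j e..root2 j e} f = sqrt 2 * I"
    using roots_three[OF th] by (simp add: integral_unique)
  then show ?thesis unfolding period_def I_def f_def by simp
qed




definition R1 :: "real \<Rightarrow> real \<Rightarrow> real" where "R1 j e = (root1 j e)^2"
definition R2 :: "real \<Rightarrow> real \<Rightarrow> real" where "R2 j e = (root2 j e)^2"

lemma three_R: "three j e s1 s2 \<Longrightarrow> R1 j e = s1 \<and> R2 j e = s2"
  using roots_three[of j e s1 s2] by (auto simp: three_def R1_def R2_def)

lemma three_vieta:
  assumes "three j e s1 s2"
  shows "4*e = s1* s2 + s1*(2-s1-s2) + s2*(2-s1-s2)" "2*j^2 = s1* s2*(2-s1-s2)"
proof -
  from assms have f: "\<And>s. pc j e s = (s-s1)*(s-s2)*(s-(2-s1-s2))" by (auto simp: three_def)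
  have a: "pc j e 0 = (0-s1)*(0-s2)*(0-(2-s1-s2))" by (rule f)
  have b: "pc j e 1 = (1-s1)*(1-s2)*(1-(2-s1-s2))" by (rule f)
  from a show j: "2*j^2 = s1* s2*(2-s1-s2)" by (simp add: pc_def algebra_simps)
  from b j show "4*e = s1* s2 + s1*(2-s1-s2) + s2*(2-s1-s2)" by (simp add: pc_def algebra_simps)
qed

lemma three_root: "three j e s1 s2 \<Longrightarrow> pc j e s1 = 0 \<and> pc j e s2 = 0"
  by (simp add: three_def)

definition dP :: "real \<Rightarrow> real \<Rightarrow> real" where "dP e s = 3* s^2 - 4* s + 4*e"

lemma three_dP:
  assumes "three j e s1 s2"
  shows "dP e s1 = (s2-s1)*((2-s1-s2)-s1)" "dP e s2 = -((s2-s1)*((2-s1-s2)-s2))"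
  using three_vieta[OF assms] unfolding dP_def by (simp_all add: algebra_simps power2_eq_square)

lemma R_tendsto:
  assumes th: "three j0 e0 s1 s2" and jf: "(jf \<longlongrightarrow> j0) F" and ef: "(ef \<longlongrightarrow> e0) F"
  shows "((\<lambda>x. R1 (jf x) (ef x)) \<longlongrightarrow> s1) F" "((\<lambda>x. R2 (jf x) (ef x)) \<longlongrightarrow> s2) F"
    "\<forall>\<^sub>F x in F. three (jf x) (ef x) (R1 (jf x) (ef x)) (R2 (jf x) (ef x))"
proof -
  have A: "\<forall>\<^sub>F x in F. three (jf x) (ef x) (R1 (jf x) (ef x)) (R2 (jf x) (ef x)) \<and>
      \<bar>R1 (jf x) (ef x) - s1\<bar> < \<epsilon> \<and> \<bar>R2 (jf x) (ef x) - s2\<bar> < \<epsilon>" if "\<epsilon> > 0" for \<epsilon>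
    using three_near[OF th that jf ef] by eventually_elim (use three_R in metis)
  show "\<forall>\<^sub>F x in F. three (jf x) (ef x) (R1 (jf x) (ef x)) (R2 (jf x) (ef x))"
    using A[OF zero_less_one] by eventually_elim auto
  show "((\<lambda>x. R1 (jf x) (ef x)) \<longlongrightarrow> s1) F"
  proof (rule tendstoI)
    fix \<epsilon> :: real assume "\<epsilon> > 0"
    from A[OF this] show "\<forall>\<^sub>F x in F. dist (R1 (jf x) (ef x)) s1 < \<epsilon>"
      by eventually_elim (simp add: dist_real_def)
  qed
  show "((\<lambda>x. R2 (jf x) (ef x)) \<longlongrightarrow> s2) F"
  proof (rule tendstoI)
    fix \<epsilon> :: real assume "\<epsilon> > 0"
    from A[OF this] show "\<forall>\<^sub>F x in F. dist (R2 (jf x) (ef x)) s2 < \<epsilon>"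
      by eventually_elim (simp add: dist_real_def)
  qed
qed

lemma pc_diff: "pc j e x - pc j0 e0 y =
   (x - y) * (x^2 + x*y + y^2 - 2*(x+y) + 4*e) + 4*y*(e - e0) - 2*(j + j0)*(j - j0)"
  unfolding pc_def by (simp add: algebra_simps power2_eq_square power3_eq_cube)

lemma root_path_deriv:
  fixes \<sigma> jf ef :: "real \<Rightarrow> real"
  assumes jf: "(jf has_real_derivative dj) (at t0)" and ef: "(ef has_real_derivative de) (at t0)"
    and sig: "(\<sigma> \<longlongrightarrow> \<sigma> t0) (at t0)"
    and roots: "\<forall>\<^sub>F t in at t0. pc (jf t) (ef t) (\<sigma> t) = 0" and r0: "pc (jf t0) (ef t0) (\<sigma> t0) = 0"
    and nz: "dP (ef t0) (\<sigma> t0) \<noteq> 0"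
  shows "(\<sigma> has_real_derivative (4 * jf t0 * dj - 4 * \<sigma> t0 * de) / dP (ef t0) (\<sigma> t0)) (at t0)"
proof -
  define M where "M t = (\<sigma> t)^2 + \<sigma> t * \<sigma> t0 + (\<sigma> t0)^2 - 2*(\<sigma> t + \<sigma> t0) + 4*ef t" for t
  have ct: "(jf \<longlongrightarrow> jf t0) (at t0)" "(ef \<longlongrightarrow> ef t0) (at t0)"
    using jf ef by (auto dest!: DERIV_isCont simp: isCont_def)
  have Mt: "(M \<longlongrightarrow> dP (ef t0) (\<sigma> t0)) (at t0)"
  proof -
    have "(M \<longlongrightarrow> (\<sigma> t0)^2 + \<sigma> t0 * \<sigma> t0 + (\<sigma> t0)^2 - 2*(\<sigma> t0 + \<sigma> t0) + 4*ef t0) (at t0)"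
      unfolding M_def by (intro tendsto_intros sig ct)
    then show ?thesis by (simp add: dP_def power2_eq_square algebra_simps)
  qed
  have Mnz: "\<forall>\<^sub>F t in at t0. M t \<noteq> 0" using tendsto_imp_eventually_ne[OF Mt nz] .
  have qj: "((\<lambda>t. (jf t - jf t0) / (t - t0)) \<longlongrightarrow> dj) (at t0)" using jf by (simp add: has_field_derivative_iff)
  have qe: "((\<lambda>t. (ef t - ef t0) / (t - t0)) \<longlongrightarrow> de) (at t0)" using ef by (simp add: has_field_derivative_iff)
  have lim: "((\<lambda>t. (2*(jf t + jf t0) * ((jf t - jf t0) / (t - t0)) - 4 * \<sigma> t0 * ((ef t - ef t0) / (t - t0))) / M t)
      \<longlongrightarrow> (2*(jf t0 + jf t0) * dj - 4 * \<sigma> t0 * de) / dP (ef t0) (\<sigma> t0)) (at t0)"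
    by (intro tendsto_intros qj qe Mt ct nz)
  have ne: "\<forall>\<^sub>F t in at t0. t \<noteq> t0" by (simp add: eventually_at_filter)
  have ev: "\<forall>\<^sub>F t in at t0. (2*(jf t + jf t0) * ((jf t - jf t0) / (t - t0)) - 4 * \<sigma> t0 * ((ef t - ef t0) / (t - t0))) / M t
      = (\<sigma> t - \<sigma> t0) / (t - t0)"
    using roots Mnz ne
  proof (eventually_elim)
    case (elim t)
    have N: "(\<sigma> t - \<sigma> t0) * M t = 2*(jf t + jf t0)*(jf t - jf t0) - 4 * \<sigma> t0 * (ef t - ef t0)"
      using pc_diff[of "jf t" "ef t" "\<sigma> t" "jf t0" "ef t0" "\<sigma> t0"] elim r0
      by (simp add: M_def algebra_simps)
    have "2*(jf t + jf t0)*((jf t - jf t0)/(t-t0)) - 4 * \<sigma> t0 * ((ef t - ef t0)/(t-t0))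
       = (2*(jf t + jf t0)*(jf t - jf t0) - 4 * \<sigma> t0 * (ef t - ef t0))/(t - t0)"
      by (simp only: times_divide_eq_right diff_divide_distrib[symmetric])
    also have "\<dots> = ((\<sigma> t - \<sigma> t0) * M t)/(t - t0)" by (simp only: N)
    finally show ?case using elim by simp
  qed
  show ?thesis
    unfolding has_field_derivative_iff
    using Lim_transform_eventually[OF lim ev] by (simp add: algebra_simps)
qed




definition Dd :: "real \<Rightarrow> real \<Rightarrow> real \<Rightarrow> real" where
  "Dd x y t = 2 - x*(1+(cos t)^2) - y*(1+(sin t)^2)"

definition hdv :: "real \<Rightarrow> real \<Rightarrow> real \<Rightarrow> real \<Rightarrow> real \<Rightarrow> real" where
  "hdv x y dx dy t = ((1+(cos t)^2)*dx + (1+(sin t)^2)*dy) / (2 * Dd x y t * sqrt (Dd x y t))"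

lemma hh_Dd: "hh x y t = 1 / sqrt (Dd x y t)" by (simp add: hh_def Dd_def)

lemma inv_sqrt_deriv: "D0 > 0 \<Longrightarrow> ((\<lambda>x. 1 / sqrt x) has_real_derivative -1/(2*D0* sqrt D0)) (at D0)"
proof -
  assume D: "D0 > 0"
  have nz: "sqrt D0 \<noteq> 0" using D by simp
  note d = DERIV_inverse_fun[OF DERIV_real_sqrt[OF D] nz]
  have eq: "- (inverse (sqrt D0) / 2 * inverse (sqrt D0 ^ Suc (Suc 0))) = -1/(2*D0 * sqrt D0)"
    using D by (simp add: field_simps)
  show ?thesis using DERIV_cong[OF d eq] unfolding inverse_eq_divide .
qed

lemma hh_deriv:
  assumes X: "(X has_real_derivative dx) (at e within U)" and Y: "(Y has_real_derivative dy) (at e within U)"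
    and D: "Dd (X e) (Y e) t > 0"
  shows "((\<lambda>e. hh (X e) (Y e) t) has_real_derivative hdv (X e) (Y e) dx dy t) (at e within U)"
proof -
  have dD: "((\<lambda>e. Dd (X e) (Y e) t) has_real_derivative -(dx*(1+(cos t)^2)) - dy*(1+(sin t)^2)) (at e within U)"
    unfolding Dd_def by (rule derivative_eq_intros X Y refl)+ simp
  have "((\<lambda>e. 1 / sqrt (Dd (X e) (Y e) t)) has_real_derivative
     (-1/(2*Dd (X e) (Y e) t* sqrt (Dd (X e) (Y e) t))) * (-(dx*(1+(cos t)^2)) - dy*(1+(sin t)^2))) (at e within U)"
    by (rule DERIV_chain2[OF inv_sqrt_deriv[OF D] dD])
  moreover have "(-1/(2*Dd (X e) (Y e) t* sqrt (Dd (X e) (Y e) t))) * (-(dx*(1+(cos t)^2)) - dy*(1+(sin t)^2))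
      = hdv (X e) (Y e) dx dy t"
    unfolding hdv_def by (simp add: divide_simps)
  ultimately show ?thesis by (simp add: hh_Dd)
qed

definition dd :: "real \<Rightarrow> real \<Rightarrow> real \<Rightarrow> real \<Rightarrow> real \<Rightarrow> real" where
  "dd j e a1 b1 s = (4 * j * a1 - 4 * s * b1) / dP e s"

lemma three_dP_nz: "three j e s1 s2 \<Longrightarrow> dP e s1 \<noteq> 0 \<and> dP e s2 \<noteq> 0"
  using three_dP[of j e s1 s2] by (auto simp: three_def)

lemma three_Dd: "three j e s1 s2 \<Longrightarrow> Dd s1 s2 t > 0"
  using three_D[of j e s1 s2 t] by (simp add: Dd_def)

lemma period_deriv_path:
  fixes a0 a1 b0 b1 t0 :: real
  assumes th: "three (a0 + a1 * t0) (b0 + b1 * t0) s1 s2"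
  shows "((\<lambda>t. period (a0 + a1 * t) (b0 + b1 * t)) has_real_derivative
     2 * sqrt 2 * integral {0..pi/2} (hdv s1 s2 (dd (a0 + a1 * t0) (b0 + b1 * t0) a1 b1 s1)
        (dd (a0 + a1 * t0) (b0 + b1 * t0) a1 b1 s2))) (at t0)"
proof -
  define jf where "jf t = a0 + a1 * t" for t
  define ef where "ef t = b0 + b1 * t" for t
  define S1 where "S1 t = R1 (jf t) (ef t)" for t
  define S2 where "S2 t = R2 (jf t) (ef t)" for t
  have th0: "three (jf t0) (ef t0) s1 s2" using th by (simp add: jf_def ef_def)
  have jft: "((\<lambda>x. jf (g x)) \<longlongrightarrow> jf l) F" "((\<lambda>x. ef (g x)) \<longlongrightarrow> ef l) F"
    if "(g \<longlongrightarrow> l) F" for g l and F :: "'b filter"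
    unfolding jf_def ef_def by (intro tendsto_intros that)+
  have "\<forall>\<^sub>F t in nhds t0. three (jf t) (ef t) (S1 t) (S2 t)"
    unfolding S1_def S2_def using R_tendsto(3)[OF th0 jft[OF filterlim_ident]] .
  then obtain \<delta> where \<delta>: "\<delta> > 0" "\<And>t. dist t t0 < \<delta> \<Longrightarrow> three (jf t) (ef t) (S1 t) (S2 t)"
    unfolding eventually_nhds_metric by blast
  define U where "U = ball t0 \<delta>"
  have U: "open U" "convex U" "t0 \<in> U" using \<delta> by (auto simp: U_def)
  have thU: "three (jf t) (ef t) (S1 t) (S2 t)" if "t \<in> U" for t
    using \<delta>(2)[of t] that by (auto simp: U_def dist_commute)
  have Stend: "((\<lambda>x. S1 (g x)) \<longlongrightarrow> S1 t) F" "((\<lambda>x. S2 (g x)) \<longlongrightarrow> S2 t) F"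
    if "t \<in> U" "(g \<longlongrightarrow> t) F" for g t and F :: "'b filter"
    unfolding S1_def S2_def using R_tendsto(1,2)[OF thU[OF that(1)] jft[OF that(2)]]
    by (simp_all add: three_R[OF thU[OF that(1)]])
  define d1 where "d1 t = dd (jf t) (ef t) a1 b1 (S1 t)" for t
  define d2 where "d2 t = dd (jf t) (ef t) a1 b1 (S2 t)" for t
  have jd: "(jf has_real_derivative a1) (at t)" "(ef has_real_derivative b1) (at t)" for t
    unfolding jf_def ef_def by (auto intro!: derivative_eq_intros)
  have Sderiv: "(S1 has_real_derivative d1 t) (at t)" "(S2 has_real_derivative d2 t) (at t)"
    if "t \<in> U" for t
  proof -
    note tht = thU[OF that]
    have ev: "\<forall>\<^sub>F x in at t. three (jf x) (ef x) (S1 x) (S2 x)"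
      unfolding S1_def S2_def using R_tendsto(3)[OF tht jft[OF tendsto_ident_at]] 
      by (simp add: three_R[OF tht])
    have ev1: "\<forall>\<^sub>F x in at t. pc (jf x) (ef x) (S1 x) = 0" "\<forall>\<^sub>F x in at t. pc (jf x) (ef x) (S2 x) = 0"
      using ev by (auto elim!: eventually_mono dest: three_root)
    have c: "(S1 \<longlongrightarrow> S1 t) (at t)" "(S2 \<longlongrightarrow> S2 t) (at t)"
      using Stend[OF that tendsto_ident_at] by auto
    show "(S1 has_real_derivative d1 t) (at t)"
      using root_path_deriv[OF jd c(1) ev1(1)] three_root[OF tht] three_dP_nz[OF tht]
      by (simp add: d1_def dd_def)
    show "(S2 has_real_derivative d2 t) (at t)"
      using root_path_deriv[OF jd c(2) ev1(2)] three_root[OF tht] three_dP_nz[OF tht]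
      by (simp add: d2_def dd_def)
  qed
  define F where "F t = hh (S1 t) (S2 t)" for t
  define fx where "fx t = hdv (S1 t) (S2 t) (d1 t) (d2 t)" for t
  have Fd: "((\<lambda>t. F t x) has_real_derivative fx t x) (at t within U)" if "t \<in> U" for t x
    unfolding F_def fx_def
    by (rule hh_deriv) (use Sderiv[OF that] three_Dd[OF thU[OF that]] in \<open>auto intro: has_field_derivative_at_within\<close>)
  have Fi: "F t integrable_on cbox 0 (pi/2)" if "t \<in> U" for t
    unfolding F_def using hh_cont[OF thU[OF that]] by (intro integrable_continuous) 
  have fxc: "continuous_on (U \<times> cbox 0 (pi/2)) (\<lambda>(t, x). fx t x)"
  proof (intro continuous_at_imp_continuous_on ballI)
    fix z assume z: "z \<in> U \<times> cbox 0 (pi/2)"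
    then have zU: "fst z \<in> U" by auto
    note thz = thU[OF zU]
    have ft: "((\<lambda>w. fst w) \<longlongrightarrow> fst z) (at z)" "((\<lambda>w. snd w) \<longlongrightarrow> snd z) (at z)"
      by (auto intro!: tendsto_intros)
    note S = Stend[OF zU ft(1)]
    note J = jft[OF ft(1)]
    have dPt: "((\<lambda>w. dP (ef (fst w)) (S1 (fst w))) \<longlongrightarrow> dP (ef (fst z)) (S1 (fst z))) (at z)"
      "((\<lambda>w. dP (ef (fst w)) (S2 (fst w))) \<longlongrightarrow> dP (ef (fst z)) (S2 (fst z))) (at z)"
      unfolding dP_def by (intro tendsto_intros S J)+
    have "((\<lambda>w. fx (fst w) (snd w)) \<longlongrightarrow> fx (fst z) (snd z)) (at z)"
      unfolding fx_def hdv_def d1_def d2_def dd_def Dd_def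
      using three_dP_nz[OF thz] three_Dd[OF thz, of "snd z"]
      by (intro tendsto_intros S J ft dPt) (auto simp: Dd_def)
    moreover have "(\<lambda>(t, x). fx t x) = (\<lambda>w. fx (fst w) (snd w))" by (auto simp: fun_eq_iff)
    ultimately show "isCont (\<lambda>(t, x). fx t x) z" by (simp add: isCont_def)
  qed
  have L: "((\<lambda>t. integral (cbox 0 (pi/2)) (F t)) has_real_derivative integral (cbox 0 (pi/2)) (fx t0)) (at t0 within U)"
    by (rule leibniz_rule_field_derivative[OF Fd Fi fxc U(3,2)])
  then have L': "((\<lambda>t. 2 * sqrt 2 * integral {0..pi/2} (F t)) has_real_derivative 2 * sqrt 2 * integral {0..pi/2} (fx t0)) (at t0)"
    using at_within_open[OF U(3,1)] by (auto intro!: derivative_eq_intros)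
  have "((\<lambda>t. period (jf t) (ef t)) has_real_derivative 2 * sqrt 2 * integral {0..pi/2} (fx t0)) (at t0)"
    by (rule has_field_derivative_transform_within_open[OF L' U(1,3)])
       (use period_formula[OF thU] in \<open>simp add: F_def\<close>)
  moreover have "S1 t0 = s1" "S2 t0 = s2" using three_R[OF th0] by (auto simp: S1_def S2_def)
  ultimately show ?thesis by (simp add: fx_def d1_def d2_def jf_def ef_def)
qed




lemma pair_ineq:
  fixes u v w w' \<alpha> \<beta> :: real
  assumes "(u - v)*(w - w') \<ge> 0" "w > 0" "w' > 0" "\<beta> > 0" "\<alpha> + \<beta> > 0" "u \<ge> 0" "v \<ge> 0"
  shows "w*(\<alpha>*(1+v) + \<beta>*(1+u)) + w'*(\<alpha>*(1+u) + \<beta>*(1+v)) > 0"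
proof -
  define Y where "Y = (1+v)*w + (1+u)*w'"
  have Y: "Y > 0" using assms by (simp add: Y_def add_pos_pos)
  have "w*(\<alpha>*(1+v) + \<beta>*(1+u)) + w'*(\<alpha>*(1+u) + \<beta>*(1+v)) = \<beta>*((u - v)*(w - w')) + (\<alpha>+\<beta>)*Y"
    by (simp add: Y_def algebra_simps)
  also have "\<dots> > 0"
  proof -
    have "\<beta>*((u - v)*(w - w')) \<ge> 0" using assms by simp
    moreover have "(\<alpha>+\<beta>)*Y > 0" using assms Y by simp
    ultimately show ?thesis by linarith
  qed
  finally show ?thesis .
qed

lemma phi_mono: "0 < D \<Longrightarrow> D \<le> D' \<Longrightarrow> 1 / (2 * D' * sqrt D') \<le> 1 / (2 * D * sqrt (D::real))"
  by (intro divide_left_mono mult_mono mult_pos_pos) (auto intro: real_sqrt_le_mono)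

lemma sign_lemma:
  assumes th: "three j e x y" and b: "\<beta> > 0" and ab: "\<alpha> + \<beta> > 0"
  shows "integral {0..pi/2} (hdv x y \<alpha> \<beta>) > 0"
proof -
  from th have p: "0 < x" "x < y" by (auto simp: three_def)
  define k where "k = hdv x y \<alpha> \<beta>"
  have Dpos: "Dd x y t > 0" for t using three_Dd[OF th] .
  have kc: "continuous_on A k" for A
  proof -
    have "2 * Dd x y t * sqrt (Dd x y t) \<noteq> 0" for t using Dpos[of t] by simp
    then show ?thesis unfolding k_def hdv_def Dd_def
      by (intro continuous_intros) (auto simp: Dd_def)
  qed
  define I where "I = integral {0..pi/2} k"
  have hI: "(k has_integral I) {0..pi/2}"
    unfolding I_def using kc by (intro integrable_integral integrable_continuous_interval)
  have "((k \<circ> (+) (pi/2)) has_integral I) {-(pi/2)..0}"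
    using hI by (subst has_integral_shift_Icc_real) simp
  then have "((\<lambda>t. (k \<circ> (+) (pi/2)) (-t)) has_integral I) {-0..-(-(pi/2))}"
    by (subst has_integral_reflect_real)
  then have hR: "((\<lambda>t. k (pi/2 - t)) has_integral I) {0..pi/2}" by (simp add: o_def)
  define m where "m t = k t + k (pi/2 - t)" for t
  have hm: "(m has_integral 2 * I) {0..pi/2}"
    using has_integral_add[OF hI hR] by (simp add: m_def[abs_def])
  have mpos: "m t > 0" for t
  proof -
    have cs: "cos (pi/2 - t) = sin t" and sc: "sin (pi/2 - t) = cos t" by (simp_all add: cos_diff sin_diff)
    define u where "u = (sin t)^2"
    define v where "v = (cos t)^2"
    define w where "w = 1 / (2 * Dd x y t * sqrt (Dd x y t))"
    define w' where "w' = 1 / (2 * Dd x y (pi/2 - t) * sqrt (Dd x y (pi/2 - t)))"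
    have D1: "Dd x y t = 2 - x*(1+v) - y*(1+u)" by (simp add: Dd_def u_def v_def)
    have D2: "Dd x y (pi/2 - t) = 2 - x*(1+u) - y*(1+v)" by (simp add: Dd_def u_def v_def cs sc)
    have k1: "k t = w*(\<alpha>*(1+v) + \<beta>*(1+u))"
      unfolding k_def hdv_def w_def u_def v_def by (simp add: algebra_simps add_divide_distrib)
    have k2: "k (pi/2 - t) = w'*(\<alpha>*(1+u) + \<beta>*(1+v))"
      unfolding k_def hdv_def w'_def u_def v_def by (simp add: algebra_simps add_divide_distrib cs sc)
    have "(u - v)*(w - w') \<ge> 0"
    proof (cases "u \<le> v")
      case True
      have "(x - y)*(v - u) \<le> 0" using p True by (intro mult_nonpos_nonneg) auto
      then have "Dd x y (pi/2 - t) \<le> Dd x y t" unfolding D1 D2 by (simp add: algebra_simps add_divide_distrib)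
      then have "w \<le> w'" unfolding w_def w'_def using Dpos by (intro phi_mono) auto
      then show ?thesis using True by (intro mult_nonpos_nonpos) auto
    next
      case False
      have "(x - y)*(u - v) \<le> 0" using p False by (intro mult_nonpos_nonneg) auto
      then have "Dd x y t \<le> Dd x y (pi/2 - t)" unfolding D1 D2 by (simp add: algebra_simps add_divide_distrib)
      then have "w' \<le> w" unfolding w_def w'_def using Dpos by (intro phi_mono) auto
      then show ?thesis using False by (intro mult_nonneg_nonneg) auto
    qed
    moreover have "w > 0" "w' > 0" using Dpos by (auto simp: w_def w'_def)
    ultimately show ?thesis unfolding m_def k1 k2 using b ab
      by (intro pair_ineq) (auto simp: u_def v_def)
  qed
  have mc: "continuous_on {0..pi/2} m" unfolding m_def using kc
    by (intro continuous_intros continuous_on_compose2[OF kc]) auto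
  obtain t1 where t1: "t1 \<in> {0..pi/2}" "\<And>t. t \<in> {0..pi/2} \<Longrightarrow> m t1 \<le> m t"
    using continuous_attains_inf[OF compact_Icc _ mc] by auto
  have c: "((\<lambda>x. m t1) has_integral (pi/2) * m t1) {0..pi/2}"
    using has_integral_const_real[of "m t1" 0 "pi/2"] by simp
  have "(pi/2) * m t1 \<le> 2 * I"
    by (rule has_integral_le[OF c hm]) (use t1 in auto)
  moreover have "(pi/2) * m t1 > 0" using mpos[of t1] by simp
  ultimately show ?thesis unfolding I_def k_def by simp
qed




lemma hdv_neg: "hdv x y (-a) (-b) t = - hdv x y a b t"
  by (simp add: hdv_def algebra_simps minus_divide_left)

theorem proposition4:
  fixes J E :: real
  assumes "(J, E) \<in> D1"
  shows "(\<exists>d. ((\<lambda>e. period J e) has_real_derivative d) (at E) \<and> d > 0)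
       \<and> (\<exists>d. ((\<lambda>j. period j E) has_real_derivative d) (at J) \<and> d < 0)"
proof -
  obtain s1 s2 where th: "three J E s1 s2" using D1_three[OF assms] by blast
  define s3 where "s3 = 2 - s1 - s2"
  have p: "0 < s1" "s1 < s2" "s2 < s3" using th by (auto simp: three_def s3_def)
  have J0: "J > 0" using assms by (simp add: D1_def)
  have P1: "dP E s1 = (s2-s1)*(s3-s1)" and P2: "dP E s2 = -((s2-s1)*(s3-s2))"
    using three_dP[OF th] by (simp_all add: s3_def)
  have pos: "s2 - s1 > 0" "s3 - s1 > 0" "s3 - s2 > 0" using p by auto
  have dE: "((\<lambda>t. period (J + 0 * t) (0 + 1 * t)) has_real_derivative
     2 * sqrt 2 * integral {0..pi/2} (hdv s1 s2 (dd (J + 0 * E) (0 + 1 * E) 0 1 s1)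
        (dd (J + 0 * E) (0 + 1 * E) 0 1 s2))) (at E)"
    by (rule period_deriv_path) (use th in simp)
  define \<alpha> where "\<alpha> = -4 * s1 / dP E s1"
  define \<beta> where "\<beta> = -4 * s2 / dP E s2"
  have ab: "dd J E 0 1 s1 = \<alpha>" "dd J E 0 1 s2 = \<beta>" by (simp_all add: dd_def \<alpha>_def \<beta>_def)
  have b: "\<beta> > 0" unfolding \<beta>_def P2 using p pos by (simp add: divide_pos_pos)
  have "\<alpha> + \<beta> = 4 * s3 / ((s3-s1)*(s3-s2))"
    unfolding \<alpha>_def \<beta>_def P1 P2 using pos by (simp add: divide_simps; algebra)
  then have abp: "\<alpha> + \<beta> > 0" using p pos by simp
  have part1: "\<exists>d. ((\<lambda>e. period J e) has_real_derivative d) (at E) \<and> d > 0"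
    using dE sign_lemma[OF th b abp] ab by (intro exI[of _ "2 * sqrt 2 * integral {0..pi/2} (hdv s1 s2 \<alpha> \<beta>)"]) auto
  have dJ: "((\<lambda>t. period (0 + 1 * t) (E + 0 * t)) has_real_derivative
     2 * sqrt 2 * integral {0..pi/2} (hdv s1 s2 (dd (0 + 1 * J) (E + 0 * J) 1 0 s1)
        (dd (0 + 1 * J) (E + 0 * J) 1 0 s2))) (at J)"
    by (rule period_deriv_path) (use th in simp)
  define \<gamma> where "\<gamma> = 4 * J / dP E s1"
  define \<delta> where "\<delta> = 4 * J / dP E s2"
  have gd: "dd J E 1 0 s1 = \<gamma>" "dd J E 1 0 s2 = \<delta>" by (simp_all add: dd_def \<gamma>_def \<delta>_def)
  have d: "-\<delta> > 0" unfolding \<delta>_def P2 using J0 pos by (simp add: divide_pos_pos)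
  have "\<gamma> + \<delta> = - (4 * J / ((s3-s1)*(s3-s2)))"
    unfolding \<gamma>_def \<delta>_def P1 P2 using pos by (simp add: divide_simps; algebra)
  moreover have "4 * J / ((s3-s1)*(s3-s2)) > 0" using J0 pos by simp
  ultimately have gdp: "-\<gamma> + -\<delta> > 0" by linarith
  have neg: "integral {0..pi/2} (hdv s1 s2 \<gamma> \<delta>) < 0"
  proof -
    have "integral {0..pi/2} (hdv s1 s2 (-\<gamma>) (-\<delta>)) > 0" by (rule sign_lemma[OF th d gdp])
    then show ?thesis unfolding hdv_neg integral_neg by simp
  qed
  have part2: "\<exists>d. ((\<lambda>j. period j E) has_real_derivative d) (at J) \<and> d < 0"
    using dJ neg gd by (intro exI[of _ "2 * sqrt 2 * integral {0..pi/2} (hdv s1 s2 \<gamma> \<delta>)"])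
      (auto simp: mult_pos_neg)
  show ?thesis using part1 part2 by blast
qed


end
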